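(* Consider the weighted case $d_i=\sqrt{n/(i(n-i))}$ for $i=1,\dots,n-1$. Fix $n\ge2$, any $u\in\{1,\dots,n-1\}$ and $\sigma^2>0$. Let $(\beta^*_{u,j})_{j\ge1}$ be a real sequence with $\frac1p\sum_{j=1}^p(\beta^*_{u,j})^2\to\bar\beta^2$, where $0<\bar\beta^2<\infty$. For each $p$, let $\beta^*\in\mathbb{R}^{(n-1)\times p}$ have only its $u$-th row nonzero, equal to $(\beta^*_{u,1},\dots,\beta^*_{u,p})$, let $W\in\mathbb{R}^{n\times p}$ have i.i.d. $N(0,\sigma^2)$ entries, and $\bar Y=\bar X\beta^*+W$. Then the probability that the first change-point $\hat u_p$ selected by the weighted group fused Lasso equals $u$ tends to $1$ as $p\to\infty$.
   Context: For positive weights $d_1,\dots,d_{n-1}$, $X$ is the $n\times(n-1)$ matrix with $X_{k,j}=d_j$ if $k>j$ and $0$ otherwise, and $\bar X$ is obtained from $X$ by centering each column to mean zero; explicitly $\bar X_{k,i}=(i/n-1)d_i$ for $k\le i$ and $\bar X_{k,i}=(i/n)d_i$ for $k>i$. The group fused Lasso on centered data $\bar Y\in\mathbb{R}^{n\times p}$ with parameter $\lambda>0$ is $\min_{\beta\in\mathbb{R}^{(n-1)\times p}}\frac12\|\bar Y-\bar X\beta\|^2+\lambda\sum_{i=1}^{n-1}\|\beta_{i,\bullet}\|$. The first change-point selected is $\hat u_p\in\arg\max_i\|(\bar X^\top\bar Y)_{i,\bullet}\|$ (the first row to become nonzero as $\lambda$ decreases), ties broken arbitrarily. *)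

theory Defs
  imports "HOL-Probability.Probability"
begin

text \<open>Indices: rows k in {1..n}, change-point columns i in {1..n-1}, data columns j in {1..p}.\<close>

definition gfl_weight :: "nat \<Rightarrow> nat \<Rightarrow> real" where
  "gfl_weight n i = sqrt (real n / (real i * (real n - real i)))"

definition Xbar :: "nat \<Rightarrow> (nat \<Rightarrow> real) \<Rightarrow> nat \<Rightarrow> nat \<Rightarrow> real" where
  "Xbar n d k i = (if k \<le> i then (real i / real n - 1) * d i else (real i / real n) * d i)"

definition XtY :: "nat \<Rightarrow> (nat \<Rightarrow> real) \<Rightarrow> (nat \<Rightarrow> nat \<Rightarrow> real) \<Rightarrow> nat \<Rightarrow> nat \<Rightarrow> real" where
  "XtY n d Y i j = (\<Sum>k=1..n. Xbar n d k i * Y k j)"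

definition row_norm_XtY :: "nat \<Rightarrow> nat \<Rightarrow> (nat \<Rightarrow> real) \<Rightarrow> (nat \<Rightarrow> nat \<Rightarrow> real) \<Rightarrow> nat \<Rightarrow> real" where
  "row_norm_XtY n p d Y i = sqrt (\<Sum>j=1..p. (XtY n d Y i j)\<^sup>2)"

text \<open>First selected change-point equals u (regardless of the tie-breaking rule):
  u is the unique maximiser of the row norms.\<close>
definition first_cp_is :: "nat \<Rightarrow> nat \<Rightarrow> (nat \<Rightarrow> real) \<Rightarrow> (nat \<Rightarrow> nat \<Rightarrow> real) \<Rightarrow> nat \<Rightarrow> bool" where
  "first_cp_is n p d Y u \<longleftrightarrow>
     (\<forall>i\<in>{1..n-1}. i \<noteq> u \<longrightarrow> row_norm_XtY n p d Y i < row_norm_XtY n p d Y u)"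

definition Ybar :: "nat \<Rightarrow> (nat \<Rightarrow> real) \<Rightarrow> nat \<Rightarrow> (nat \<Rightarrow> real) \<Rightarrow> (nat \<times> nat \<Rightarrow> real) \<Rightarrow> nat \<Rightarrow> nat \<Rightarrow> real" where
  "Ybar n d u b W k j = (\<Sum>i=1..n-1. Xbar n d k i * (if i = u then b j else 0)) + W (k, j)"

definition noise_measure :: "nat \<Rightarrow> nat \<Rightarrow> real \<Rightarrow> (nat \<times> nat \<Rightarrow> real) measure" where
  "noise_measure n p \<sigma> = PiM ({1..n} \<times> {1..p}) (\<lambda>_. density lborel (normal_density 0 \<sigma>))"

end

theory Submission
  imports Defs
begin


lemma abs_mult_le_sq: "\<bar>a * b\<bar> \<le> a\<^sup>2 + (b::real)\<^sup>2"
proof -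
  have "0 \<le> (\<bar>a\<bar> - \<bar>b\<bar>)\<^sup>2" by simp
  then have "2 * (\<bar>a\<bar> * \<bar>b\<bar>) \<le> \<bar>a\<bar>\<^sup>2 + \<bar>b\<bar>\<^sup>2" by (simp add: power2_diff)
  moreover have "0 \<le> \<bar>a\<bar> * \<bar>b\<bar>" by simp
  ultimately show ?thesis unfolding abs_mult power2_abs by linarith
qed

lemma (in finite_measure) integrable_mult_sq:
  fixes f g :: "'a \<Rightarrow> real"
  assumes [measurable]: "f \<in> borel_measurable M" "g \<in> borel_measurable M"
    and "integrable M (\<lambda>x. (f x)\<^sup>2)" "integrable M (\<lambda>x. (g x)\<^sup>2)"
  shows "integrable M (\<lambda>x. f x * g x)"
proof (rule Bochner_Integration.integrable_bound[where f="\<lambda>x. (f x)\<^sup>2 + (g x)\<^sup>2"])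
  show "integrable M (\<lambda>x. (f x)\<^sup>2 + (g x)\<^sup>2)" using assms by auto
  show "AE x in M. norm (f x * g x) \<le> norm ((f x)\<^sup>2 + (g x)\<^sup>2)"
  proof (rule AE_I2)
    fix x
    have "\<bar>f x * g x\<bar> \<le> (f x)\<^sup>2 + (g x)\<^sup>2"
      by (rule abs_mult_le_sq)
    then show "norm (f x * g x) \<le> norm ((f x)\<^sup>2 + (g x)\<^sup>2)" by simp
  qed
qed simp

lemma (in finite_measure) integrable_sq_add:
  fixes f g :: "'a \<Rightarrow> real"
  assumes [measurable]: "f \<in> borel_measurable M" "g \<in> borel_measurable M"
    and "integrable M (\<lambda>x. (f x)\<^sup>2)" "integrable M (\<lambda>x. (g x)\<^sup>2)"
  shows "integrable M (\<lambda>x. (f x + g x)\<^sup>2)"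
proof -
  have "integrable M (\<lambda>x. (f x)\<^sup>2 + (g x)\<^sup>2 + 2 * (f x * g x))"
    using integrable_mult_sq[OF assms] assms by auto
  then show ?thesis by (simp add: power2_sum mult.assoc)
qed

lemma (in finite_measure) integrable_sq_sum:
  fixes f :: "'i \<Rightarrow> 'a \<Rightarrow> real"
  assumes "finite J" "\<And>j. j \<in> J \<Longrightarrow> f j \<in> borel_measurable M"
    "\<And>j. j \<in> J \<Longrightarrow> integrable M (\<lambda>x. (f j x)\<^sup>2)"
  shows "integrable M (\<lambda>x. (\<Sum>j\<in>J. f j x)\<^sup>2)"
  using assms
proof (induction J rule: finite_induct)
  case empty then show ?case by simp
next
  case (insert a F)
  have m: "(\<lambda>x. \<Sum>j\<in>F. f j x) \<in> borel_measurable M"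
    using insert by (intro borel_measurable_sum) auto
  show ?case using insert
    by (simp add: integrable_sq_add[OF _ m] )
qed

lemma (in prob_space) variance_sum_indep:
  fixes Y :: "'i \<Rightarrow> 'a \<Rightarrow> real"
  assumes fin: "finite J" and ind: "indep_vars (\<lambda>_. borel) Y J"
    and sq: "\<And>j. j \<in> J \<Longrightarrow> integrable M (\<lambda>x. (Y j x)\<^sup>2)"
  shows "variance (\<lambda>x. \<Sum>j\<in>J. Y j x) = (\<Sum>j\<in>J. variance (Y j))"
proof -
  have meas[measurable]: "Y j \<in> borel_measurable M" if "j \<in> J" for j
    using ind that by (auto simp: indep_vars_def)
  have int: "integrable M (Y j)" if "j \<in> J" for j
    using square_integrable_imp_integrable[OF meas[OF that] sq[OF that]] .
  define C where "C j x = Y j x - expectation (Y j)" for j x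
  have Cm[measurable]: "C j \<in> borel_measurable M" if "j \<in> J" for j
    unfolding C_def using meas[OF that] by (intro borel_measurable_diff) auto
  have Csq: "integrable M (\<lambda>x. (C j x)\<^sup>2)" if "j \<in> J" for j
    unfolding C_def diff_conv_add_uminus
    by (rule integrable_sq_add) (use that sq in auto)
  have Cint: "integrable M (C j)" if "j \<in> J" for j
    unfolding C_def using int[OF that] by (intro Bochner_Integration.integrable_diff) auto
  have Cexp: "expectation (C j) = 0" if "j \<in> J" for j
    unfolding C_def using int[OF that]
    by (subst Bochner_Integration.integral_diff) (auto simp: prob_space)
  have indC: "indep_vars (\<lambda>_. borel) C J"
    unfolding C_def by (rule indep_vars_compose2[OF ind]) auto
  have cross: "expectation (\<lambda>x. C j x * C k x) = (if j = k then variance (Y j) else 0)"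
    if "j \<in> J" "k \<in> J" for j k
  proof (cases "j = k")
    case True then show ?thesis by (simp add: C_def power2_eq_square)
  next
    case False
    have i2: "indep_vars (\<lambda>_. borel) C {j, k}"
      by (rule indep_vars_subset[OF indC]) (use that in auto)
    have "expectation (\<lambda>x. \<Prod>i\<in>{j,k}. C i x) = (\<Prod>i\<in>{j,k}. expectation (C i))"
      by (rule indep_vars_lebesgue_integral[OF _ i2]) (use that Cint in auto)
    then show ?thesis using False that Cexp by simp
  qed
  have Esum: "expectation (\<lambda>x. \<Sum>j\<in>J. Y j x) = (\<Sum>j\<in>J. expectation (Y j))"
    by (rule Bochner_Integration.integral_sum) (use int in auto)
  have "variance (\<lambda>x. \<Sum>j\<in>J. Y j x) = expectation (\<lambda>x. (\<Sum>j\<in>J. C j x)\<^sup>2)"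
    by (simp add: Esum C_def sum_subtractf)
  also have "\<dots> = expectation (\<lambda>x. \<Sum>j\<in>J. \<Sum>k\<in>J. C j x * C k x)"
    by (simp add: power2_eq_square sum_product)
  also have "\<dots> = (\<Sum>j\<in>J. expectation (\<lambda>x. \<Sum>k\<in>J. C j x * C k x))"
    by (rule Bochner_Integration.integral_sum)
       (intro Bochner_Integration.integrable_sum integrable_mult_sq; use Csq in auto)
  also have "\<dots> = (\<Sum>j\<in>J. \<Sum>k\<in>J. expectation (\<lambda>x. C j x * C k x))"
    by (intro sum.cong refl Bochner_Integration.integral_sum integrable_mult_sq) (use Csq in auto)
  also have "\<dots> = (\<Sum>j\<in>J. \<Sum>k\<in>J. (if j = k then variance (Y j) else 0))"
    by (intro sum.cong refl) (simp add: cross)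
  also have "\<dots> = (\<Sum>j\<in>J. variance (Y j))"
    using fin by (simp add: sum.delta)
  finally show ?thesis .
qed



definition lin :: "nat \<Rightarrow> (nat \<Rightarrow> real) \<Rightarrow> nat \<Rightarrow> (nat \<times> nat \<Rightarrow> real) \<Rightarrow> real" where
  "lin n c j W = (\<Sum>k=1..n. c k * W (k, j))"

lemma sq_add_le: "(x + y)\<^sup>2 \<le> 2 * x\<^sup>2 + 2 * (y::real)\<^sup>2"
proof -
  have "0 \<le> (x - y)\<^sup>2" by simp
  then show ?thesis by (simp add: power2_sum power2_diff)
qed

lemma aux_lin4: "(X::real) \<le> X' \<Longrightarrow> Y \<le> Y' \<Longrightarrow> A + 4 * X + 4 * Y \<le> A + 4 * (X' + Y')"
  by (simp add: algebra_simps)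

definition Dcol :: "nat \<Rightarrow> real \<Rightarrow> real \<Rightarrow> (nat \<Rightarrow> real) \<Rightarrow> (nat \<Rightarrow> real) \<Rightarrow> real \<Rightarrow> nat \<Rightarrow> (nat \<times> nat \<Rightarrow> real) \<Rightarrow> real" where
  "Dcol n \<alpha> \<gamma> ca cb bj j W = (\<alpha> * bj + lin n ca j W)\<^sup>2 - (\<gamma> * bj + lin n cb j W)\<^sup>2"

lemma lin_comb: "\<alpha> * lin n ca j W - \<gamma> * lin n cb j W = lin n (\<lambda>k. \<alpha> * ca k - \<gamma> * cb k) j W"
  unfolding lin_def by (simp add: sum_distrib_left algebra_simps flip: sum_subtractf)

lemma Dcol_eq: "Dcol n \<alpha> \<gamma> ca cb bj j W =
   (\<alpha>\<^sup>2 - \<gamma>\<^sup>2) * bj\<^sup>2 + (2 * bj * lin n (\<lambda>k. \<alpha> * ca k - \<gamma> * cb k) j W + ((lin n ca j W)\<^sup>2 + - ((lin n cb j W)\<^sup>2)))"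
  unfolding Dcol_def lin_comb[symmetric] by (simp add: power2_sum algebra_simps power2_eq_square)

lemma lin_sq_bound: "(lin n c j W)\<^sup>2 \<le> (\<Sum>k=1..n. (c k)\<^sup>2) * (\<Sum>k=1..n. (W (k,j))\<^sup>2)"
  unfolding lin_def by (rule Cauchy_Schwarz_ineq_sum)

lemma lin_4_bound: "(lin n c j W)^4 \<le> (\<Sum>k=1..n. (c k)\<^sup>2)\<^sup>2 * (real n * (\<Sum>k=1..n. (W (k,j))^4))"
proof -
  have "(lin n c j W)^4 = ((lin n c j W)\<^sup>2)\<^sup>2" by simp
  also have "\<dots> \<le> ((\<Sum>k=1..n. (c k)\<^sup>2) * (\<Sum>k=1..n. (W (k,j))\<^sup>2))\<^sup>2"
    by (rule power_mono[OF lin_sq_bound]) simp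
  also have "\<dots> = (\<Sum>k=1..n. (c k)\<^sup>2)\<^sup>2 * (\<Sum>k=1..n. (W (k,j))\<^sup>2)\<^sup>2"
    by (simp add: power_mult_distrib)
  also have "\<dots> \<le> (\<Sum>k=1..n. (c k)\<^sup>2)\<^sup>2 * (real n * (\<Sum>k=1..n. (W (k,j))^4))"
  proof (rule mult_left_mono)
    have "(\<Sum>k=1..n. (W (k,j))\<^sup>2)\<^sup>2 \<le> (\<Sum>k=1..n. ((W (k,j))\<^sup>2)\<^sup>2) * card {1..n}"
      by (rule sum_squared_le_sum_of_squares)
    then show "(\<Sum>k=1..n. (W (k,j))\<^sup>2)\<^sup>2 \<le> real n * (\<Sum>k=1..n. (W (k,j))^4)"
      by (simp add: mult.commute)
  qed simp
  finally show ?thesis .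
qed


context
  fixes \<sigma> :: real
  assumes \<sigma>_pos: "\<sigma> > 0"
begin

abbreviation "NN \<equiv> density lborel (normal_density 0 \<sigma>)"

lemma NN_prob: "prob_space NN"
  by (rule prob_space_normal_density[OF \<sigma>_pos])

lemma PiNN_prob: "prob_space (PiM I (\<lambda>_. NN))"
proof -
  interpret product_prob_space "\<lambda>_. NN" I
    by (simp add: product_prob_space_def product_sigma_finite_def product_prob_space_axioms_def
        NN_prob prob_space_imp_sigma_finite)
  show ?thesis by (rule P.prob_space_axioms)
qed

lemma coord_meas: "a \<in> I \<Longrightarrow> (\<lambda>W. W a) \<in> borel_measurable (PiM I (\<lambda>_. NN))"
proof -
  assume a: "a \<in> I"
  have m: "(\<lambda>W. W a) \<in> measurable (PiM I (\<lambda>_. NN)) NN"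
    using a by (intro measurable_component_singleton)
  have "measurable (PiM I (\<lambda>_. NN)) NN = borel_measurable (PiM I (\<lambda>_. NN))"
    by (rule measurable_cong_sets) auto
  with m show ?thesis by simp
qed

lemma coord_distr: "finite I \<Longrightarrow> a \<in> I \<Longrightarrow> distr (PiM I (\<lambda>_. NN)) NN (\<lambda>W. W a) = NN"
proof -
  assume "finite I" "a \<in> I"
  interpret product_prob_space "\<lambda>_. NN" I
    by (simp add: product_prob_space_def product_sigma_finite_def product_prob_space_axioms_def
        NN_prob prob_space_imp_sigma_finite)
  show ?thesis by (rule PiM_component) fact
qed

lemma coord_integral:
  assumes "finite I" "a \<in> I" and g[measurable]: "g \<in> borel_measurable borel"
  shows "(\<integral>W. g (W a) \<partial>PiM I (\<lambda>_. NN)) = (\<integral>x. normal_density 0 \<sigma> x * g x \<partial>lborel)"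
    and "integrable (PiM I (\<lambda>_. NN)) (\<lambda>W. g (W a)) \<longleftrightarrow> integrable lborel (\<lambda>x. normal_density 0 \<sigma> x * g x)"
proof -
  have m: "(\<lambda>W. W a) \<in> measurable (PiM I (\<lambda>_. NN)) NN"
    using assms by (intro measurable_component_singleton) 
  have gN: "g \<in> borel_measurable NN" by simp
  have "(\<integral>W. g (W a) \<partial>PiM I (\<lambda>_. NN)) = integral\<^sup>L (distr (PiM I (\<lambda>_. NN)) NN (\<lambda>W. W a)) g"
    by (rule integral_distr[OF m gN, symmetric])
  also have "\<dots> = integral\<^sup>L NN g" by (simp only: coord_distr[OF assms(1,2)])
  also have "\<dots> = (\<integral>x. normal_density 0 \<sigma> x * g x \<partial>lborel)"
    by (subst integral_density) auto
  finally show "(\<integral>W. g (W a) \<partial>PiM I (\<lambda>_. NN)) = (\<integral>x. normal_density 0 \<sigma> x * g x \<partial>lborel)" .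
  have "integrable (PiM I (\<lambda>_. NN)) (\<lambda>W. g (W a)) \<longleftrightarrow> integrable (distr (PiM I (\<lambda>_. NN)) NN (\<lambda>W. W a)) g"
    by (rule integrable_distr_eq[OF m gN, symmetric])
  also have "\<dots> \<longleftrightarrow> integrable NN g" by (simp only: coord_distr[OF assms(1,2)])
  also have "\<dots> \<longleftrightarrow> integrable lborel (\<lambda>x. normal_density 0 \<sigma> x * g x)"
    by (subst integrable_density) auto
  finally show "integrable (PiM I (\<lambda>_. NN)) (\<lambda>W. g (W a)) \<longleftrightarrow> integrable lborel (\<lambda>x. normal_density 0 \<sigma> x * g x)" .
qed

lemma coord_pow:
  assumes "finite I" "a \<in> I"
  shows "integrable (PiM I (\<lambda>_. NN)) (\<lambda>W. (W a) ^ k)"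
  using coord_integral(2)[OF assms, of "\<lambda>x. x ^ k"] integrable_normal_moment[OF \<sigma>_pos, of 0 k]
  by simp

lemma coord_mom1:
  assumes "finite I" "a \<in> I"
  shows "(\<integral>W. W a \<partial>PiM I (\<lambda>_. NN)) = 0"
  using coord_integral(1)[OF assms, of "\<lambda>x. x"] integral_normal_moment_nz_1[OF \<sigma>_pos, of 0]
  by simp

lemma coord_mom2:
  assumes "finite I" "a \<in> I"
  shows "(\<integral>W. (W a)\<^sup>2 \<partial>PiM I (\<lambda>_. NN)) = \<sigma>\<^sup>2"
  using coord_integral(1)[OF assms, of "\<lambda>x. x\<^sup>2"] integral_normal_moment_even[OF \<sigma>_pos, of 0 1]
  by (simp add: power2_eq_square)

lemma coord_mom4:
  assumes "finite I" "a \<in> I"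
  shows "(\<integral>W. (W a)^4 \<partial>PiM I (\<lambda>_. NN)) = 3 * \<sigma>^4"
proof -
  have "(\<integral>x. normal_density 0 \<sigma> x * (x - 0) ^ (2 * 2) \<partial>lborel) = fact (2 * 2) / ((2 / \<sigma>\<^sup>2) ^ 2 * fact 2)"
    by (rule integral_normal_moment_even[OF \<sigma>_pos])
  moreover have "fact (2 * 2) / ((2 / \<sigma>\<^sup>2) ^ 2 * fact 2) = 3 * \<sigma>^4"
    using \<sigma>_pos by (simp add: fact_numeral field_simps power2_eq_square power4_eq_xxxx)
  ultimately show ?thesis
    using coord_integral(1)[OF assms, of "\<lambda>x. x^4"] by simp
qed

lemma coord_indep:
  assumes "finite I" "I \<noteq> {}"
  shows "prob_space.indep_vars (PiM I (\<lambda>_. NN)) (\<lambda>_. NN) (\<lambda>a W. W a) I"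
proof -
  interpret product_prob_space "\<lambda>_. NN" I
    by (simp add: product_prob_space_def product_sigma_finite_def product_prob_space_axioms_def
        NN_prob prob_space_imp_sigma_finite)
  show ?thesis
  proof (rule P.indep_vars_iff_distr_eq_PiM'[OF assms(2), THEN iffD2])
    show "random_variable NN (\<lambda>W. W a)" if "a \<in> I" for a
      using that by (intro measurable_component_singleton)
    have "distr (PiM I (\<lambda>_. NN)) (PiM I (\<lambda>_. NN)) (\<lambda>x. \<lambda>a\<in>I. x a) = PiM I (\<lambda>_. NN)"
      using distr_PiM_restrict_finite[OF assms(1) subset_refl] by (simp add: restrict_def)
    also have "\<dots> = PiM I (\<lambda>a. distr (PiM I (\<lambda>_. NN)) NN (\<lambda>x. x a))"
      by (intro PiM_cong refl) (simp add: PiM_component)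
    finally show "distr (PiM I (\<lambda>_. NN)) (PiM I (\<lambda>_. NN)) (\<lambda>x. \<lambda>a\<in>I. x a) = PiM I (\<lambda>a. distr (PiM I (\<lambda>_. NN)) NN (\<lambda>x. x a))" .
  qed
qed

lemma coord_cross:
  assumes "finite I" "a \<in> I" "a' \<in> I" "a \<noteq> a'"
  shows "(\<integral>W. W a * W a' \<partial>PiM I (\<lambda>_. NN)) = 0"
proof -
  interpret prob_space "PiM I (\<lambda>_. NN)" by (rule PiNN_prob)
  have ind: "indep_vars (\<lambda>_. NN) (\<lambda>a W. W a) I" using coord_indep assms by auto
  have ind2: "indep_vars (\<lambda>_. borel) (\<lambda>a W. W a) {a, a'}"
    by (rule indep_vars_compose2[where Y="\<lambda>_ x. x", OF indep_vars_subset[OF ind], simplified])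
       (use assms in auto)
  have "(\<integral>W. (\<Prod>c\<in>{a,a'}. W c) \<partial>PiM I (\<lambda>_. NN)) = (\<Prod>c\<in>{a,a'}. \<integral>W. W c \<partial>PiM I (\<lambda>_. NN))"
    by (rule indep_vars_lebesgue_integral[OF _ ind2])
       (use assms coord_pow[OF assms(1), of _ 1] in auto)
  then show ?thesis using assms coord_mom1[OF assms(1,2)] by simp
qed

lemma lin_meas:
  assumes "\<And>k. k \<in> {1..n} \<Longrightarrow> (k,j) \<in> I"
  shows "lin n c j \<in> borel_measurable (PiM I (\<lambda>_. NN))"
  unfolding lin_def
  by (intro borel_measurable_sum borel_measurable_times borel_measurable_const coord_meas assms)

context
  fixes n p j :: nat
  assumes j: "j \<in> {1..p}"
begin

abbreviation "MM \<equiv> PiM ({1..n}\<times>{1..p}) (\<lambda>_. NN)"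

lemma fin_I: "finite ({1..n}\<times>{1..p})" by simp

lemma kj_in: "k \<in> {1..n} \<Longrightarrow> (k,j) \<in> {1..n}\<times>{1..p}"
  using j by auto

lemma lin_meas': "lin n c j \<in> borel_measurable MM"
  by (rule lin_meas) (rule kj_in)

lemma e4_int: "integrable MM (\<lambda>W. \<Sum>k=1..n. (W (k,j))^4)"
  by (intro Bochner_Integration.integrable_sum coord_pow[OF fin_I kj_in])

lemma e4_exp: "(\<integral>W. (\<Sum>k=1..n. (W (k,j))^4) \<partial>MM) = real n * (3 * \<sigma>^4)"
proof -
  have "(\<integral>W. (\<Sum>k=1..n. (W (k,j))^4) \<partial>MM) = (\<Sum>k=1..n. (\<integral>W. (W (k,j))^4 \<partial>MM))"
    by (rule Bochner_Integration.integral_sum) (rule coord_pow[OF fin_I kj_in])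
  also have "\<dots> = (\<Sum>k=1..n. 3 * \<sigma>^4)"
    by (intro sum.cong refl coord_mom4[OF fin_I kj_in])
  finally show ?thesis by simp
qed

lemma lin4_int: "integrable MM (\<lambda>W. (lin n c j W)^4)"
proof (rule Bochner_Integration.integrable_bound[OF _ _ AE_I2])
  show "integrable MM (\<lambda>W. (\<Sum>k=1..n. (c k)\<^sup>2)\<^sup>2 * (real n * (\<Sum>k=1..n. (W (k,j))^4)))"
    using e4_int by auto
  show "(\<lambda>W. (lin n c j W)^4) \<in> borel_measurable MM" using lin_meas' by measurable
  fix W show "norm ((lin n c j W)^4) \<le> norm ((\<Sum>k=1..n. (c k)\<^sup>2)\<^sup>2 * (real n * (\<Sum>k=1..n. (W (k,j))^4)))"
    using lin_4_bound[of n c j W] by (simp add: sum_nonneg)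
qed

lemma lin4_exp: "(\<integral>W. (lin n c j W)^4 \<partial>MM) \<le> (\<Sum>k=1..n. (c k)\<^sup>2)\<^sup>2 * (real n * (real n * (3 * \<sigma>^4)))"
proof -
  have "(\<integral>W. (lin n c j W)^4 \<partial>MM) \<le> (\<integral>W. (\<Sum>k=1..n. (c k)\<^sup>2)\<^sup>2 * (real n * (\<Sum>k=1..n. (W (k,j))^4)) \<partial>MM)"
    by (rule integral_mono[OF lin4_int]) (use e4_int lin_4_bound in auto)
  also have "\<dots> = (\<Sum>k=1..n. (c k)\<^sup>2)\<^sup>2 * (real n * (real n * (3 * \<sigma>^4)))"
    using e4_exp by simp
  finally show ?thesis .
qed

lemma MM_fm: "finite_measure MM"
  using PiNN_prob[of "{1..n}\<times>{1..p}"] by (simp only: prob_space_def)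

lemma coord_prod_int: "k \<in> {1..n} \<Longrightarrow> k' \<in> {1..n} \<Longrightarrow> integrable MM (\<lambda>W. W (k,j) * W (k',j))"
  by (intro finite_measure.integrable_mult_sq[OF MM_fm] coord_meas kj_in coord_pow[OF fin_I kj_in])

lemma coord_prod_exp: "k \<in> {1..n} \<Longrightarrow> k' \<in> {1..n} \<Longrightarrow>
   (\<integral>W. W (k,j) * W (k',j) \<partial>MM) = (if k = k' then \<sigma>\<^sup>2 else 0)"
  using coord_cross[OF fin_I kj_in kj_in] coord_mom2[OF fin_I kj_in]
  by (auto simp: power2_eq_square)

lemma lin_prod_int: "integrable MM (\<lambda>W. lin n c j W * lin n c' j W)"
  unfolding lin_def sum_product
proof (intro Bochner_Integration.integrable_sum)
  fix k k' assume "k \<in> {1..n}" "k' \<in> {1..n}"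
  then have "integrable MM (\<lambda>W. (c k * c' k') * (W (k,j) * W (k',j)))"
    by (intro integrable_mult_right coord_prod_int)
  then show "integrable MM (\<lambda>W. c k * W (k,j) * (c' k' * W (k',j)))"
    by (simp add: ac_simps)
qed

lemma coord_int1: "k \<in> {1..n} \<Longrightarrow> integrable MM (\<lambda>W. W (k,j))"
  using coord_pow[OF fin_I kj_in, of k 1] by simp

lemma lin_int: "integrable MM (lin n c j)"
  unfolding lin_def
  by (intro Bochner_Integration.integrable_sum integrable_mult_right coord_int1)

lemma lin_exp: "(\<integral>W. lin n c j W \<partial>MM) = 0"
proof -
  have "(\<integral>W. lin n c j W \<partial>MM) = (\<Sum>k=1..n. (\<integral>W. c k * W (k,j) \<partial>MM))"
    unfolding lin_def
    by (rule Bochner_Integration.integral_sum) (intro integrable_mult_right coord_int1)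
  also have "\<dots> = 0"
  proof (intro sum.neutral ballI)
    fix k assume "k \<in> {1..n}"
    then show "(\<integral>W. c k * W (k,j) \<partial>MM) = 0"
      using coord_mom1[OF fin_I kj_in[OF \<open>k \<in> {1..n}\<close>]] by simp
  qed
  finally show ?thesis .
qed

lemma lin_prod_exp: "(\<integral>W. lin n c j W * lin n c' j W \<partial>MM) = \<sigma>\<^sup>2 * (\<Sum>k=1..n. c k * c' k)"
proof -
  have "(\<integral>W. lin n c j W * lin n c' j W \<partial>MM) = (\<integral>W. (\<Sum>k=1..n. \<Sum>k'=1..n. (c k * c' k') * (W (k,j) * W (k',j))) \<partial>MM)"
    unfolding lin_def sum_product by (simp add: ac_simps)
  also have "\<dots> = (\<Sum>k=1..n. \<Sum>k'=1..n. (\<integral>W. (c k * c' k') * (W (k,j) * W (k',j)) \<partial>MM))"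
    by (subst Bochner_Integration.integral_sum, (intro Bochner_Integration.integrable_sum integrable_mult_right coord_prod_int; simp))
       (intro sum.cong refl Bochner_Integration.integral_sum integrable_mult_right coord_prod_int; simp)
  also have "\<dots> = (\<Sum>k=1..n. \<Sum>k'=1..n. (c k * c' k') * (if k = k' then \<sigma>\<^sup>2 else 0))"
  proof (intro sum.cong refl)
    fix k k' assume kk: "k \<in> {1..n}" "k' \<in> {1..n}"
    show "(\<integral>W. (c k * c' k') * (W (k,j) * W (k',j)) \<partial>MM) = (c k * c' k') * (if k = k' then \<sigma>\<^sup>2 else 0)"
      using coord_prod_exp[OF kk] by (simp only: integral_mult_right_zero)
  qed
  also have "\<dots> = (\<Sum>k=1..n. (c k * c' k) * \<sigma>\<^sup>2)"
    by (intro sum.cong refl) (simp add: if_distrib[where f="\<lambda>x. _ * x"] sum.delta cong: if_cong)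
  finally show ?thesis by (simp add: sum_distrib_left ac_simps)
qed

lemma lin_sq_int: "integrable MM (\<lambda>W. (lin n c j W)\<^sup>2)"
  using lin_prod_int[of c c] by (simp add: power2_eq_square)

lemma lin_sq_exp: "(\<integral>W. (lin n c j W)\<^sup>2 \<partial>MM) = \<sigma>\<^sup>2 * (\<Sum>k=1..n. (c k)\<^sup>2)"
  using lin_prod_exp[of c c] by (simp add: power2_eq_square)

lemma linsq_sq_int: "integrable MM (\<lambda>W. ((lin n c j W)\<^sup>2)\<^sup>2)"
  using lin4_int[of c] by simp

lemma const_int: "integrable MM (\<lambda>W. c::real)"
  by (rule finite_measure.integrable_const[OF MM_fm])

lemma Dcol_meas: "Dcol n \<alpha> \<gamma> ca cb bj j \<in> borel_measurable MM"
  unfolding Dcol_def using lin_meas'[of ca] lin_meas'[of cb] by measurable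

lemma Dcol_sq_int: "integrable MM (\<lambda>W. (Dcol n \<alpha> \<gamma> ca cb bj j W)\<^sup>2)"
proof -
  note fm = finite_measure.integrable_sq_add[OF MM_fm]
  have mL: "(\<lambda>W. 2 * bj * lin n (\<lambda>k. \<alpha> * ca k - \<gamma> * cb k) j W) \<in> borel_measurable MM"
    using lin_meas' by measurable
  have mQ: "(\<lambda>W. (lin n ca j W)\<^sup>2 + - ((lin n cb j W)\<^sup>2)) \<in> borel_measurable MM"
    using lin_meas'[of ca] lin_meas'[of cb] by measurable
  have mQa: "(\<lambda>W. (lin n ca j W)\<^sup>2) \<in> borel_measurable MM"
    using lin_meas'[of ca] by measurable
  have mQb: "(\<lambda>W. - (lin n cb j W)\<^sup>2) \<in> borel_measurable MM"
    using lin_meas'[of cb] by measurable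
  have iL: "integrable MM (\<lambda>W. (2 * bj * lin n (\<lambda>k. \<alpha> * ca k - \<gamma> * cb k) j W)\<^sup>2)"
    using lin_sq_int[of "\<lambda>k. \<alpha> * ca k - \<gamma> * cb k"] by (simp add: power_mult_distrib)
  have iQ: "integrable MM (\<lambda>W. ((lin n ca j W)\<^sup>2 + - ((lin n cb j W)\<^sup>2))\<^sup>2)"
    by (rule fm[OF mQa mQb]) (use linsq_sq_int in auto)
  have "integrable MM (\<lambda>W. ((\<alpha>\<^sup>2 - \<gamma>\<^sup>2) * bj\<^sup>2 + (2 * bj * lin n (\<lambda>k. \<alpha> * ca k - \<gamma> * cb k) j W + ((lin n ca j W)\<^sup>2 + - ((lin n cb j W)\<^sup>2))))\<^sup>2)"
    by (rule fm[OF _ borel_measurable_add[OF mL mQ] const_int fm[OF mL mQ iL iQ]]) simp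
  then show ?thesis by (simp only: Dcol_eq)
qed

lemma Dcol_int: "integrable MM (Dcol n \<alpha> \<gamma> ca cb bj j)"
  by (rule finite_measure.square_integrable_imp_integrable[OF MM_fm Dcol_meas Dcol_sq_int])

lemma Dcol_exp:
  assumes "(\<Sum>k=1..n. (ca k)\<^sup>2) = (\<Sum>k=1..n. (cb k)\<^sup>2)"
  shows "(\<integral>W. Dcol n \<alpha> \<gamma> ca cb bj j W \<partial>MM) = (\<alpha>\<^sup>2 - \<gamma>\<^sup>2) * bj\<^sup>2"
proof -
  have p: "prob_space MM" by (rule PiNN_prob)
  have "(\<integral>W. Dcol n \<alpha> \<gamma> ca cb bj j W \<partial>MM) =
    (\<integral>W. (\<alpha>\<^sup>2 - \<gamma>\<^sup>2) * bj\<^sup>2 + (2 * bj * lin n (\<lambda>k. \<alpha> * ca k - \<gamma> * cb k) j W + ((lin n ca j W)\<^sup>2 + - ((lin n cb j W)\<^sup>2))) \<partial>MM)"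
    by (simp only: Dcol_eq)
  also have "\<dots> = (\<alpha>\<^sup>2 - \<gamma>\<^sup>2) * bj\<^sup>2 + (2 * bj * 0 + (\<sigma>\<^sup>2 * (\<Sum>k=1..n. (ca k)\<^sup>2) + - (\<sigma>\<^sup>2 * (\<Sum>k=1..n. (cb k)\<^sup>2))))"
  proof -
    let ?L = "lin n (\<lambda>k. \<alpha> * ca k - \<gamma> * cb k) j"
    have iX: "integrable MM (\<lambda>W. 2 * bj * ?L W)" by (intro integrable_mult_right lin_int)
    have iY: "integrable MM (\<lambda>W. (lin n ca j W)\<^sup>2)" by (rule lin_sq_int)
    have iZ: "integrable MM (\<lambda>W. - (lin n cb j W)\<^sup>2)" using lin_sq_int by simp
    have c: "(\<integral>W. (\<alpha>\<^sup>2 - \<gamma>\<^sup>2) * bj\<^sup>2 \<partial>MM) = (\<alpha>\<^sup>2 - \<gamma>\<^sup>2) * bj\<^sup>2"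
      using p by (simp add: prob_space.prob_space)
    have x: "(\<integral>W. 2 * bj * ?L W \<partial>MM) = 2 * bj * 0"
      by (simp only: integral_mult_right_zero lin_exp)
    have y: "(\<integral>W. (lin n ca j W)\<^sup>2 \<partial>MM) = \<sigma>\<^sup>2 * (\<Sum>k=1..n. (ca k)\<^sup>2)" by (rule lin_sq_exp)
    have z: "(\<integral>W. - (lin n cb j W)\<^sup>2 \<partial>MM) = - (\<sigma>\<^sup>2 * (\<Sum>k=1..n. (cb k)\<^sup>2))"
      by (simp only: Bochner_Integration.integral_minus lin_sq_exp)
    show ?thesis
      by (simp only: Bochner_Integration.integral_add[OF const_int Bochner_Integration.integrable_add[OF iX Bochner_Integration.integrable_add[OF iY iZ]]]
                     Bochner_Integration.integral_add[OF iX Bochner_Integration.integrable_add[OF iY iZ]]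
                     Bochner_Integration.integral_add[OF iY iZ] c x y z)
  qed
  also have "\<dots> = (\<alpha>\<^sup>2 - \<gamma>\<^sup>2) * bj\<^sup>2"
    using assms by simp
  finally show ?thesis .
qed

lemma Dcol_var:
  assumes "(\<Sum>k=1..n. (ca k)\<^sup>2) = (\<Sum>k=1..n. (cb k)\<^sup>2)"
  shows "(\<integral>W. (Dcol n \<alpha> \<gamma> ca cb bj j W - (\<alpha>\<^sup>2 - \<gamma>\<^sup>2) * bj\<^sup>2)\<^sup>2 \<partial>MM)
     \<le> 8 * bj\<^sup>2 * (\<sigma>\<^sup>2 * (\<Sum>k=1..n. (\<alpha> * ca k - \<gamma> * cb k)\<^sup>2))
       + 4 * ((\<Sum>k=1..n. (ca k)\<^sup>2)\<^sup>2 * (real n * (real n * (3 * \<sigma>^4)))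
            + (\<Sum>k=1..n. (cb k)\<^sup>2)\<^sup>2 * (real n * (real n * (3 * \<sigma>^4))))"
proof -
  let ?L = "lin n (\<lambda>k. \<alpha> * ca k - \<gamma> * cb k) j"
  let ?a = "lin n ca j" and ?b = "lin n cb j"
  have pt: "(Dcol n \<alpha> \<gamma> ca cb bj j W - (\<alpha>\<^sup>2 - \<gamma>\<^sup>2) * bj\<^sup>2)\<^sup>2
      \<le> 8 * bj\<^sup>2 * (?L W)\<^sup>2 + 4 * (?a W)^4 + 4 * (?b W)^4" for W
  proof -
    have "(Dcol n \<alpha> \<gamma> ca cb bj j W - (\<alpha>\<^sup>2 - \<gamma>\<^sup>2) * bj\<^sup>2)\<^sup>2 = (2 * bj * ?L W + ((?a W)\<^sup>2 + - ((?b W)\<^sup>2)))\<^sup>2"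
      by (simp only: Dcol_eq) simp
    also have "\<dots> \<le> 2 * (2 * bj * ?L W)\<^sup>2 + 2 * ((?a W)\<^sup>2 + - ((?b W)\<^sup>2))\<^sup>2"
      by (rule sq_add_le)
    also have "((?a W)\<^sup>2 + - ((?b W)\<^sup>2))\<^sup>2 \<le> 2 * ((?a W)\<^sup>2)\<^sup>2 + 2 * (- ((?b W)\<^sup>2))\<^sup>2"
      by (rule sq_add_le)
    finally show ?thesis by (simp add: power_mult_distrib)
  qed
  have iR: "integrable MM (\<lambda>W. 8 * bj\<^sup>2 * (?L W)\<^sup>2 + 4 * (?a W)^4 + 4 * (?b W)^4)"
    using lin_sq_int lin4_int by auto
  have iLHS: "integrable MM (\<lambda>W. (Dcol n \<alpha> \<gamma> ca cb bj j W - (\<alpha>\<^sup>2 - \<gamma>\<^sup>2) * bj\<^sup>2)\<^sup>2)"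
    unfolding diff_conv_add_uminus
    by (rule finite_measure.integrable_sq_add[OF MM_fm Dcol_meas _ Dcol_sq_int const_int]) simp
  have "(\<integral>W. (Dcol n \<alpha> \<gamma> ca cb bj j W - (\<alpha>\<^sup>2 - \<gamma>\<^sup>2) * bj\<^sup>2)\<^sup>2 \<partial>MM)
      \<le> (\<integral>W. 8 * bj\<^sup>2 * (?L W)\<^sup>2 + 4 * (?a W)^4 + 4 * (?b W)^4 \<partial>MM)"
    by (rule integral_mono[OF iLHS iR pt])
  also have "\<dots> = 8 * bj\<^sup>2 * (\<integral>W. (?L W)\<^sup>2 \<partial>MM) + 4 * (\<integral>W. (?a W)^4 \<partial>MM) + 4 * (\<integral>W. (?b W)^4 \<partial>MM)"
    using lin_sq_int lin4_int by simp
  also have "\<dots> \<le> 8 * bj\<^sup>2 * (\<sigma>\<^sup>2 * (\<Sum>k=1..n. (\<alpha> * ca k - \<gamma> * cb k)\<^sup>2))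
       + 4 * ((\<Sum>k=1..n. (ca k)\<^sup>2)\<^sup>2 * (real n * (real n * (3 * \<sigma>^4)))
            + (\<Sum>k=1..n. (cb k)\<^sup>2)\<^sup>2 * (real n * (real n * (3 * \<sigma>^4))))"
    unfolding lin_sq_exp by (rule aux_lin4[OF lin4_exp[of ca] lin4_exp[of cb]])
  finally show ?thesis .
qed

end

end


lemma lin_restrict: "lin n c j (restrict W ({1..n}\<times>{j})) = lin n c j W"
  unfolding lin_def by (intro sum.cong refl) auto

lemma Dcol_restrict: "Dcol n \<alpha> \<gamma> ca cb bj j (restrict W ({1..n}\<times>{j})) = Dcol n \<alpha> \<gamma> ca cb bj j W"
  unfolding Dcol_def lin_restrict ..

context
  fixes \<sigma> :: real
  assumes \<sigma>_pos: "\<sigma> > 0"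
begin

abbreviation "NN' \<equiv> density lborel (normal_density 0 \<sigma>)"

context
  fixes n p :: nat and \<alpha> \<gamma> :: real and ca cb b :: "nat \<Rightarrow> real"
  assumes n: "n \<ge> 1" and p: "p \<ge> 1"
begin

abbreviation "MM' \<equiv> PiM ({1..n}\<times>{1..p}) (\<lambda>_. NN')"

lemma Dcols_indep:
  "prob_space.indep_vars MM' (\<lambda>_. borel) (\<lambda>j. Dcol n \<alpha> \<gamma> ca cb (b j) j) {1..p}"
proof -
  interpret prob_space MM' by (rule PiNN_prob[OF \<sigma>_pos])
  have ne: "{1..n}\<times>{1..p} \<noteq> {}" using n p by auto
  have ind: "indep_vars (\<lambda>_. NN') (\<lambda>a W. W a) ({1..n}\<times>{1..p})"
    using coord_indep[OF \<sigma>_pos _ ne] by simp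
  have r: "indep_vars (\<lambda>j. PiM ({1..n}\<times>{j}) (\<lambda>_. NN')) (\<lambda>j W. restrict (\<lambda>i. W i) ({1..n}\<times>{j})) {1..p}"
    by (rule indep_vars_restrict[OF ind]) (auto simp: disjoint_family_on_def)
  have c: "indep_vars (\<lambda>_. borel) (\<lambda>j W. Dcol n \<alpha> \<gamma> ca cb (b j) j (restrict (\<lambda>i. W i) ({1..n}\<times>{j}))) {1..p}"
  proof (rule indep_vars_compose2[OF r])
    fix j assume "j \<in> {1..p}"
    have m1: "lin n ca j \<in> borel_measurable (PiM ({1..n}\<times>{j}) (\<lambda>_. NN'))"
      by (rule lin_meas[OF \<sigma>_pos]) auto
    have m2: "lin n cb j \<in> borel_measurable (PiM ({1..n}\<times>{j}) (\<lambda>_. NN'))"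
      by (rule lin_meas[OF \<sigma>_pos]) auto
    show "Dcol n \<alpha> \<gamma> ca cb (b j) j \<in> borel_measurable (PiM ({1..n}\<times>{j}) (\<lambda>_. NN'))"
      unfolding Dcol_def using m1 m2 by measurable
  qed
  show ?thesis
    using c by (simp only: Dcol_restrict)
qed

lemma Dsum_prob:
  assumes sq: "(\<Sum>k=1..n. (ca k)\<^sup>2) = (\<Sum>k=1..n. (cb k)\<^sup>2)"
    and cS: "(\<alpha>\<^sup>2 - \<gamma>\<^sup>2) * (\<Sum>j=1..p. (b j)\<^sup>2) > 0"
  shows "measure MM' {W \<in> space MM'. (\<Sum>j=1..p. Dcol n \<alpha> \<gamma> ca cb (b j) j W) \<le> 0}
    \<le> (8 * (\<sigma>\<^sup>2 * (\<Sum>k=1..n. (\<alpha> * ca k - \<gamma> * cb k)\<^sup>2)) * (\<Sum>j=1..p. (b j)\<^sup>2)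
         + 4 * ((\<Sum>k=1..n. (ca k)\<^sup>2)\<^sup>2 * (real n * (real n * (3 * \<sigma>^4)))
            + (\<Sum>k=1..n. (cb k)\<^sup>2)\<^sup>2 * (real n * (real n * (3 * \<sigma>^4)))) * real p)
      / ((\<alpha>\<^sup>2 - \<gamma>\<^sup>2) * (\<Sum>j=1..p. (b j)\<^sup>2))\<^sup>2"
proof -
  interpret prob_space MM' by (rule PiNN_prob[OF \<sigma>_pos])
  define K1 where "K1 = \<sigma>\<^sup>2 * (\<Sum>k=1..n. (\<alpha> * ca k - \<gamma> * cb k)\<^sup>2)"
  define K2 where "K2 = 4 * ((\<Sum>k=1..n. (ca k)\<^sup>2)\<^sup>2 * (real n * (real n * (3 * \<sigma>^4)))
            + (\<Sum>k=1..n. (cb k)\<^sup>2)\<^sup>2 * (real n * (real n * (3 * \<sigma>^4))))"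
  define S where "S = (\<Sum>j=1..p. (b j)\<^sup>2)"
  define c where "c = \<alpha>\<^sup>2 - \<gamma>\<^sup>2"
  define D where "D j = Dcol n \<alpha> \<gamma> ca cb (b j) j" for j
  define f where "f W = (\<Sum>j=1..p. D j W)" for W
  have Dm: "D j \<in> borel_measurable MM'" if "j \<in> {1..p}" for j
    unfolding D_def by (rule Dcol_meas[OF \<sigma>_pos that])
  have Dsq: "integrable MM' (\<lambda>W. (D j W)\<^sup>2)" if "j \<in> {1..p}" for j
    unfolding D_def by (rule Dcol_sq_int[OF \<sigma>_pos that])
  have Di: "integrable MM' (D j)" if "j \<in> {1..p}" for j
    unfolding D_def by (rule Dcol_int[OF \<sigma>_pos that])
  have DE: "expectation (D j) = c * (b j)\<^sup>2" if "j \<in> {1..p}" for j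
    unfolding D_def c_def by (rule Dcol_exp[OF \<sigma>_pos that sq])
  have DV: "variance (D j) \<le> 8 * (b j)\<^sup>2 * K1 + K2" if "j \<in> {1..p}" for j
    unfolding DE[OF that] unfolding D_def c_def K1_def K2_def
    using Dcol_var[OF \<sigma>_pos that sq, of \<alpha> \<gamma> "b j"] by (simp add: ac_simps)
  have ind: "indep_vars (\<lambda>_. borel) D {1..p}"
    unfolding D_def using Dcols_indep by simp
  have fm[measurable]: "f \<in> borel_measurable MM'"
    unfolding f_def by (intro borel_measurable_sum Dm)
  have fsq: "integrable MM' (\<lambda>W. (f W)\<^sup>2)"
    unfolding f_def by (rule integrable_sq_sum) (use Dm Dsq in auto)
  have fE: "expectation f = c * S"
  proof -
    have "expectation f = (\<Sum>j=1..p. expectation (D j))"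
      unfolding f_def by (rule Bochner_Integration.integral_sum) (rule Di)
    also have "\<dots> = (\<Sum>j=1..p. c * (b j)\<^sup>2)" by (intro sum.cong refl DE) 
    finally show ?thesis by (simp add: S_def sum_distrib_left)
  qed
  have fV: "variance f \<le> 8 * K1 * S + K2 * real p"
  proof -
    have "variance f = (\<Sum>j=1..p. variance (D j))"
      unfolding f_def by (rule variance_sum_indep[OF _ ind Dsq]) auto
    also have "\<dots> \<le> (\<Sum>j=1..p. 8 * (b j)\<^sup>2 * K1 + K2)" by (intro sum_mono DV)
    also have "\<dots> = 8 * K1 * S + K2 * real p"
      by (simp add: S_def sum.distrib sum_distrib_left sum_distrib_right ac_simps)
    finally show ?thesis .
  qed
  have pos: "c * S > 0" using cS by (simp add: c_def S_def)
  have "{W \<in> space MM'. f W \<le> 0} \<subseteq> {W \<in> space MM'. c * S \<le> \<bar>f W - expectation f\<bar>}"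
    using pos fE by auto
  then have "prob {W \<in> space MM'. f W \<le> 0} \<le> prob {W \<in> space MM'. c * S \<le> \<bar>f W - expectation f\<bar>}"
    by (intro finite_measure_mono) measurable
  also have "\<dots> \<le> variance f / (c * S)\<^sup>2"
    by (rule Chebyshev_inequality[OF fm fsq pos])
  also have "\<dots> \<le> (8 * K1 * S + K2 * real p) / (c * S)\<^sup>2"
    by (intro divide_right_mono fV) simp
  finally show ?thesis
    unfolding f_def D_def K1_def K2_def S_def c_def .
qed

end
end


lemma sum_if_le: "(\<Sum>k=1..n. (if k \<le> m then A else B)) = (if n \<le> m then real n * A else real m * A + real (n - m) * (B::real))"
proof (induction n)
  case 0 then show ?case by simp
next
  case (Suc n)
  have "(\<Sum>k=1..Suc n. (if k \<le> m then A else B)) = (\<Sum>k=1..n. (if k \<le> m then A else B)) + (if Suc n \<le> m then A else B)"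
    by simp
  also have "\<dots> = (if Suc n \<le> m then real (Suc n) * A else real m * A + real (Suc n - m) * B)"
    unfolding Suc.IH
    by (cases "Suc n \<le> m"; cases "n \<le> m") (auto simp: algebra_simps of_nat_diff Suc_diff_le)
  finally show ?case .
qed

lemma sum_if_le': "m \<le> n \<Longrightarrow> (\<Sum>k=1..n. (if k \<le> m then A else B)) = real m * A + real (n - m) * (B::real)"
proof -
  assume mn: "m \<le> n"
  have "(\<Sum>k=1..n. (if k \<le> m then A else B)) = (if n \<le> m then real n * A else real m * A + real (n - m) * (B::real))"
    by (rule sum_if_le)
  then show ?thesis using mn by (cases "n \<le> m") auto
qed

lemma Xbar_sq_sum:
  assumes "i \<le> n"
  shows "(\<Sum>k=1..n. (Xbar n d k i)\<^sup>2) = (d i)\<^sup>2 * real i * (real n - real i) / real n"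
proof -
  have "(\<Sum>k=1..n. (Xbar n d k i)\<^sup>2) = (\<Sum>k=1..n. (if k \<le> i then ((real i / real n - 1) * d i)\<^sup>2 else ((real i / real n) * d i)\<^sup>2))"
    by (intro sum.cong refl) (simp add: Xbar_def)
  also have "\<dots> = real i * ((real i / real n - 1) * d i)\<^sup>2 + real (n - i) * ((real i / real n) * d i)\<^sup>2"
    by (rule sum_if_le'[OF assms])
  also have "\<dots> = (d i)\<^sup>2 * real i * (real n - real i) / real n"
  proof (cases "n = 0")
    case True then show ?thesis using assms by simp
  next
    case False
    then show ?thesis using assms
      by (simp add: of_nat_diff field_simps power2_eq_square)
  qed
  finally show ?thesis .
qed

lemma Xbar_cross_sum:
  assumes "a < c" "c \<le> n"
  shows "(\<Sum>k=1..n. Xbar n d k a * Xbar n d k c) = d a * d c * real a * (real n - real c) / real n"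
proof -
  define A1 where "A1 = (real a / real n - 1) * d a"
  define A2 where "A2 = (real a / real n) * d a"
  define B1 where "B1 = (real c / real n - 1) * d c"
  define B2 where "B2 = (real c / real n) * d c"
  have "(\<Sum>k=1..n. Xbar n d k a * Xbar n d k c) = (\<Sum>k=1..n. (if k \<le> a then A1 * B1 else A2 * B1) + (if k \<le> c then 0 else A2 * B2 - A2 * B1))"
    by (intro sum.cong refl) (use assms in \<open>auto simp: Xbar_def A1_def A2_def B1_def B2_def\<close>)
  also have "\<dots> = (real a * (A1 * B1) + real (n - a) * (A2 * B1)) + (real c * 0 + real (n - c) * (A2 * B2 - A2 * B1))"
    unfolding sum.distrib using assms by (simp only: sum_if_le'[of a n] sum_if_le'[of c n] less_imp_le order.trans)
  also have "\<dots> = d a * d c * real a * (real n - real c) / real n"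
  proof (cases "n = 0")
    case True then show ?thesis using assms by simp
  next
    case False
    then show ?thesis using assms unfolding A1_def A2_def B1_def B2_def
      by (simp add: of_nat_diff field_simps power2_eq_square)
  qed
  finally show ?thesis .
qed

lemma gw_sq: "1 \<le> i \<Longrightarrow> i < n \<Longrightarrow> (gfl_weight n i)\<^sup>2 = real n / (real i * (real n - real i))"
  unfolding gfl_weight_def by (subst real_sqrt_pow2) (auto simp: of_nat_less_iff[symmetric] intro!: divide_nonneg_pos mult_pos_pos)

lemma col_norm:
  assumes "i \<in> {1..n-1}"
  shows "(\<Sum>k=1..n. (Xbar n (gfl_weight n) k i)\<^sup>2) = 1"
proof -
  have i: "1 \<le> i" "i < n" using assms by auto
  have ni: "real n - real i > 0" using i by simp
  show ?thesis
    unfolding Xbar_sq_sum[OF less_imp_le[OF i(2)]] gw_sq[OF i] using i ni by (simp add: field_simps)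
qed

lemma aux_field: "(x::real) > 0 \<Longrightarrow> y > 0 \<Longrightarrow> m > 0 \<Longrightarrow> P > 0 \<Longrightarrow> Q > 0 \<Longrightarrow>
  m / (x * P) * (m / (y * Q)) * x\<^sup>2 * Q\<^sup>2 / m\<^sup>2 = x * Q / (P * y)"
  by (simp add: field_simps power2_eq_square)

lemma cross_lt:
  assumes "a \<in> {1..n-1}" "c \<in> {1..n-1}" "a < c"
  shows "(\<Sum>k=1..n. Xbar n (gfl_weight n) k a * Xbar n (gfl_weight n) k c)\<^sup>2 < 1"
proof -
  have a: "1 \<le> a" "a < n" and c: "1 \<le> c" "c < n" using assms by auto
  have na: "real n - real a > 0" and nc: "real n - real c > 0" using a c by auto
  have "(\<Sum>k=1..n. Xbar n (gfl_weight n) k a * Xbar n (gfl_weight n) k c)\<^sup>2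
     = (gfl_weight n a)\<^sup>2 * (gfl_weight n c)\<^sup>2 * (real a)\<^sup>2 * (real n - real c)\<^sup>2 / (real n)\<^sup>2"
    unfolding Xbar_cross_sum[OF assms(3) less_imp_le[OF c(2)]] by (simp add: power_mult_distrib power_divide)
  also have "\<dots> = (real a * (real n - real c)) / ((real n - real a) * real c)"
    unfolding gw_sq[OF a] gw_sq[OF c] using a c na nc by (intro aux_field) auto
  also have "\<dots> < 1"
  proof (subst divide_less_eq_1_pos)
    show "0 < (real n - real a) * real c" using na c by simp
    have "real a * real n < real c * real n" using assms a by (simp add: mult_strict_right_mono)
    then show "real a * (real n - real c) < (real n - real a) * real c" by (simp add: algebra_simps)
  qed
  finally show ?thesis .
qed

lemma cross_lt':
  assumes "i \<in> {1..n-1}" "u \<in> {1..n-1}" "i \<noteq> u"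
  shows "(\<Sum>k=1..n. Xbar n (gfl_weight n) k i * Xbar n (gfl_weight n) k u)\<^sup>2 < 1"
proof (cases "i < u")
  case True then show ?thesis using cross_lt[OF assms(1,2)] by simp
next
  case False
  then have "u < i" using assms(3) by simp
  then show ?thesis using cross_lt[OF assms(2,1)] by (simp add: mult.commute)
qed

lemma XtY_eq:
  assumes "u \<in> {1..n-1}"
  shows "XtY n d (Ybar n d u b W) i j = (\<Sum>k=1..n. Xbar n d k i * Xbar n d k u) * b j + lin n (\<lambda>k. Xbar n d k i) j W"
proof -
  have Y: "Ybar n d u b W k j = Xbar n d k u * b j + W (k, j)" for k
  proof -
    have "(\<Sum>i'=1..n-1. Xbar n d k i' * (if i' = u then b j else 0)) = (\<Sum>i'=1..n-1. (if i' = u then Xbar n d k u * b j else 0))"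
      by (intro sum.cong refl) auto
    also have "\<dots> = Xbar n d k u * b j" using assms by (simp add: sum.delta)
    finally show ?thesis unfolding Ybar_def by simp
  qed
  show ?thesis
    unfolding XtY_def Y lin_def by (simp add: distrib_left sum.distrib sum_distrib_right mult.assoc)
qed



lemma aux_bound: "(p::real) > 0 \<Longrightarrow> s > 0 \<Longrightarrow> c \<noteq> 0 \<Longrightarrow>
  (8 * K1 * S + K2 * p) / (c * S)\<^sup>2 = (8 * K1 * s + K2) / (c\<^sup>2 * s\<^sup>2) * (1 / p)"
  if "S = s * p"
  using that by (simp add: field_simps power2_eq_square)

lemma bad_lim:
  fixes n u i :: nat and \<sigma> \<beta>sq :: real and b :: "nat \<Rightarrow> real"
  assumes n: "n \<ge> 2" and u: "u \<in> {1..n-1}" and i: "i \<in> {1..n-1}" "i \<noteq> u" and \<sigma>: "\<sigma> > 0"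
    and lim: "(\<lambda>p. (\<Sum>j=1..p. (b j)\<^sup>2) / real p) \<longlonglongrightarrow> \<beta>sq" and \<beta>: "\<beta>sq > 0"
  defines "\<alpha> \<equiv> (\<Sum>k=1..n. Xbar n (gfl_weight n) k u * Xbar n (gfl_weight n) k u)"
    and "\<gamma> \<equiv> (\<Sum>k=1..n. Xbar n (gfl_weight n) k i * Xbar n (gfl_weight n) k u)"
    and "ca \<equiv> (\<lambda>k. Xbar n (gfl_weight n) k u)" and "cb \<equiv> (\<lambda>k. Xbar n (gfl_weight n) k i)"
  shows "(\<lambda>p. measure (noise_measure n p \<sigma>) {W \<in> space (noise_measure n p \<sigma>).
            (\<Sum>j=1..p. Dcol n \<alpha> \<gamma> ca cb (b j) j W) \<le> 0}) \<longlonglongrightarrow> 0"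
proof -
  have sqa: "(\<Sum>k=1..n. (ca k)\<^sup>2) = 1" unfolding ca_def by (rule col_norm[OF u])
  have sqb: "(\<Sum>k=1..n. (cb k)\<^sup>2) = 1" unfolding cb_def by (rule col_norm[OF i(1)])
  have a1: "\<alpha> = 1" using sqa unfolding \<alpha>_def ca_def by (simp add: power2_eq_square)
  have g1: "\<gamma>\<^sup>2 < 1" unfolding \<gamma>_def by (rule cross_lt'[OF i(1) u i(2)])
  define c where "c = \<alpha>\<^sup>2 - \<gamma>\<^sup>2"
  have cpos: "c > 0" using a1 g1 by (simp add: c_def)
  define K1 where "K1 = \<sigma>\<^sup>2 * (\<Sum>k=1..n. (\<alpha> * ca k - \<gamma> * cb k)\<^sup>2)"
  define K2 where "K2 = 4 * ((\<Sum>k=1..n. (ca k)\<^sup>2)\<^sup>2 * (real n * (real n * (3 * \<sigma>^4)))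
            + (\<Sum>k=1..n. (cb k)\<^sup>2)\<^sup>2 * (real n * (real n * (3 * \<sigma>^4))))"
  define s where "s p = (\<Sum>j=1..p. (b j)\<^sup>2) / real p" for p
  define g where "g p = (8 * K1 * s p + K2) / (c\<^sup>2 * (s p)\<^sup>2) * (1 / real p)" for p
  define P where "P p = measure (noise_measure n p \<sigma>) {W \<in> space (noise_measure n p \<sigma>).
            (\<Sum>j=1..p. Dcol n \<alpha> \<gamma> ca cb (b j) j W) \<le> 0}" for p
  have slim: "s \<longlonglongrightarrow> \<beta>sq" using lim unfolding s_def .
  have ev: "eventually (\<lambda>p. p \<ge> 1 \<and> s p > 0) sequentially"
    using eventually_ge_at_top[of 1] order_tendstoD(1)[OF slim \<beta>] by eventually_elim auto
  have glim: "g \<longlonglongrightarrow> (8 * K1 * \<beta>sq + K2) / (c\<^sup>2 * \<beta>sq\<^sup>2) * 0"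
    unfolding g_def
    by (intro tendsto_intros slim lim_1_over_n) (use cpos \<beta> in simp)
  have bound: "eventually (\<lambda>p. P p \<le> g p) sequentially"
    using ev
  proof eventually_elim
    case (elim p)
    then have p1: "p \<ge> 1" and sp: "s p > 0" by auto
    have S: "(\<Sum>j=1..p. (b j)\<^sup>2) = s p * real p" using p1 by (simp add: s_def)
    have cS: "0 < (\<alpha>\<^sup>2 - \<gamma>\<^sup>2) * (\<Sum>j=1..p. (b j)\<^sup>2)"
      using cpos sp p1 unfolding S c_def by simp
    have n1: "n \<ge> 1" using n by simp
    have "P p \<le> (8 * K1 * (\<Sum>j=1..p. (b j)\<^sup>2) + K2 * real p) / (c * (\<Sum>j=1..p. (b j)\<^sup>2))\<^sup>2"
      unfolding P_def noise_measure_def K1_def K2_def c_def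
      by (rule Dsum_prob[OF \<sigma> n1 p1 _ cS]) (simp only: sqa sqb)
    also have "\<dots> = g p"
      unfolding g_def by (rule aux_bound[OF S]) (use p1 sp cpos in auto)
    finally show ?case .
  qed
  have nonneg: "eventually (\<lambda>p. 0 \<le> P p) sequentially"
    by (simp add: P_def)
  have "P \<longlonglongrightarrow> 0"
    by (rule tendsto_sandwich[OF nonneg bound tendsto_const]) (use glim in simp)
  then show ?thesis unfolding P_def .
qed

theorem theorem2:
  fixes n u :: nat and \<sigma> \<beta>sq :: real and b :: "nat \<Rightarrow> real"
  assumes "n \<ge> 2" and "u \<in> {1..n-1}" and "\<sigma> > 0"
    and "(\<lambda>p. (\<Sum>j=1..p. (b j)\<^sup>2) / real p) \<longlonglongrightarrow> \<beta>sq" and "\<beta>sq > 0"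
  shows "(\<lambda>p. measure (noise_measure n p \<sigma>)
            {W \<in> space (noise_measure n p \<sigma>).
               first_cp_is n p (gfl_weight n) (Ybar n (gfl_weight n) u b W) u})
         \<longlonglongrightarrow> 1"
proof -
  note n = assms(1) and u = assms(2) and \<sigma> = assms(3) and lim = assms(4) and \<beta> = assms(5)
  define d where "d = gfl_weight n"
  define \<alpha> where "\<alpha> = (\<Sum>k=1..n. Xbar n d k u * Xbar n d k u)"
  define \<gamma> where "\<gamma> i = (\<Sum>k=1..n. Xbar n d k i * Xbar n d k u)" for i
  define ca where "ca = (\<lambda>k. Xbar n d k u)"
  define cb where "cb i = (\<lambda>k. Xbar n d k i)" for i
  define Iset where "Iset = {1..n-1} - {u}"
  define M where "M p = noise_measure n p \<sigma>" for p
  define Bad where "Bad p i = {W \<in> space (M p). (\<Sum>j=1..p. Dcol n \<alpha> (\<gamma> i) ca (cb i) (b j) j W) \<le> 0}" for p i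
  define Good where "Good p = {W \<in> space (M p). first_cp_is n p d (Ybar n d u b W) u}" for p
  have finI: "finite Iset" by (simp add: Iset_def)
  have badlim: "(\<lambda>p. measure (M p) (Bad p i)) \<longlonglongrightarrow> 0" if "i \<in> Iset" for i
    using bad_lim[OF n u _ _ \<sigma> lim \<beta>, of i] that
    unfolding Bad_def M_def \<alpha>_def \<gamma>_def ca_def cb_def d_def Iset_def by auto
  have Mprob: "prob_space (M p)" for p
    unfolding M_def noise_measure_def by (rule PiNN_prob[OF \<sigma>])
  have bad_sets: "Bad p i \<in> sets (M p)" for p i
  proof -
    have "(\<lambda>W. \<Sum>j=1..p. Dcol n \<alpha> (\<gamma> i) ca (cb i) (b j) j W) \<in> borel_measurable (M p)"
      unfolding M_def noise_measure_def
      by (intro borel_measurable_sum Dcol_meas[OF \<sigma>])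
    then show ?thesis unfolding Bad_def by measurable
  qed
  have rown: "row_norm_XtY n p d (Ybar n d u b W) i < row_norm_XtY n p d (Ybar n d u b W) u
      \<longleftrightarrow> \<not> (\<Sum>j=1..p. Dcol n \<alpha> (\<gamma> i) ca (cb i) (b j) j W) \<le> 0" for p i W
  proof -
    have xi: "XtY n d (Ybar n d u b W) i j = \<gamma> i * b j + lin n (cb i) j W" for j
      unfolding \<gamma>_def cb_def by (rule XtY_eq[OF u])
    have xu: "XtY n d (Ybar n d u b W) u j = \<alpha> * b j + lin n ca j W" for j
      unfolding \<alpha>_def ca_def by (rule XtY_eq[OF u])
    have "(\<Sum>j=1..p. Dcol n \<alpha> (\<gamma> i) ca (cb i) (b j) j W)
        = (\<Sum>j=1..p. (XtY n d (Ybar n d u b W) u j)\<^sup>2) - (\<Sum>j=1..p. (XtY n d (Ybar n d u b W) i j)\<^sup>2)"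
      unfolding Dcol_def xi xu by (simp add: sum_subtractf)
    then show ?thesis
      unfolding row_norm_XtY_def by (simp add: real_sqrt_less_iff not_le)
  qed
  have GoodEq: "Good p = space (M p) - (\<Union>i\<in>Iset. Bad p i)" for p
    unfolding Good_def Bad_def first_cp_is_def Iset_def using rown by auto
  have low: "1 - (\<Sum>i\<in>Iset. measure (M p) (Bad p i)) \<le> measure (M p) (Good p)" for p
  proof -
    interpret prob_space "M p" by (rule Mprob)
    have U: "(\<Union>i\<in>Iset. Bad p i) \<in> sets (M p)" using bad_sets finI by auto
    have "measure (M p) (Good p) = 1 - measure (M p) (\<Union>i\<in>Iset. Bad p i)"
      unfolding GoodEq by (rule prob_compl[OF U])
    moreover have "measure (M p) (\<Union>i\<in>Iset. Bad p i) \<le> (\<Sum>i\<in>Iset. measure (M p) (Bad p i))"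
      by (rule finite_measure_subadditive_finite[OF finI]) (use bad_sets in auto)
    ultimately show ?thesis by simp
  qed
  have up: "measure (M p) (Good p) \<le> 1" for p
  proof -
    interpret prob_space "M p" by (rule Mprob)
    show ?thesis by (rule prob_le_1)
  qed
  have sumlim: "(\<lambda>p. 1 - (\<Sum>i\<in>Iset. measure (M p) (Bad p i))) \<longlonglongrightarrow> 1 - 0"
    by (intro tendsto_diff tendsto_const tendsto_null_sum badlim)
  have "(\<lambda>p. measure (M p) (Good p)) \<longlonglongrightarrow> 1"
    by (rule tendsto_sandwich[OF always_eventually always_eventually _ tendsto_const])
       (use low up sumlim in auto)
  then show ?thesis unfolding Good_def M_def d_def .
qed


end
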